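(* Let $\gamma>0$, $\tau\ge 1$, and let $\xi$ be an irrational number with continued fraction expansion $\xi=[a_0;a_1,a_2,\dots]$, convergents $p_k/q_k=[a_0;a_1,\dots,a_k]$ (in lowest terms, $q_k\ge 1$), and complete quotients $a'_k:=[a_k;a_{k+1},a_{k+2},\dots]$. Then $\xi\in D_{\gamma,\tau}$ if and only if $$\frac{q_{k+1}}{q_k^{\tau}}+\frac{1}{a'_{k+2}\,q_k^{\tau-1}}\le\frac1\gamma\qquad\text{for all }k\ge 0.$$
   Context: For $\gamma>0$ and $\tau\ge 1$, the Diophantine set $D_{\gamma,\tau}$ is the set of all real numbers $\xi$ such that $|\xi q-p|\ge \gamma/q^{\tau}$ for all $p\in\mathbb{Z}$ and all $q\in\mathbb{N}=\{1,2,3,\dots\}$. Continued fraction expansions use the standard conventions: $a_0\in\mathbb{Z}$, $a_i\in\mathbb{N}$ for $i\ge1$, $p_{-1}=1$, $q_{-1}=0$, $p_0=a_0$, $q_0=1$, and $p_{k+1}=a_{k+1}p_k+p_{k-1}$, $q_{k+1}=a_{k+1}q_k+q_{k-1}$. *)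

theory Defs
  imports Complex_Main
begin

definition diophantine_set :: "real \<Rightarrow> real \<Rightarrow> real set" where
  "diophantine_set \<gamma> \<tau> =
     {\<xi>. \<forall>p::int. \<forall>q::nat. q \<ge> 1 \<longrightarrow> \<bar>\<xi> * real q - real_of_int p\<bar> \<ge> \<gamma> / (real q powr \<tau>)}"

fun cf_complete :: "real \<Rightarrow> nat \<Rightarrow> real" where
  "cf_complete \<xi> 0 = \<xi>"
| "cf_complete \<xi> (Suc k) = 1 / (cf_complete \<xi> k - of_int \<lfloor>cf_complete \<xi> k\<rfloor>)"

definition cf_a :: "real \<Rightarrow> nat \<Rightarrow> int" where
  "cf_a \<xi> k = \<lfloor>cf_complete \<xi> k\<rfloor>"

text \<open>Denominators q_k via q_{-1}=0, q_0 = 1, q_{k+1} = a_{k+1} q_k + q_{k-1}.\<close>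
fun cf_q :: "real \<Rightarrow> nat \<Rightarrow> int" where
  "cf_q \<xi> 0 = 1"
| "cf_q \<xi> (Suc 0) = cf_a \<xi> 1"
| "cf_q \<xi> (Suc (Suc k)) = cf_a \<xi> (k + 2) * cf_q \<xi> (Suc k) + cf_q \<xi> k"

text \<open>Numerators p_k via p_{-1}=1, p_0 = a_0, p_{k+1} = a_{k+1} p_k + p_{k-1}.\<close>
fun cf_p :: "real \<Rightarrow> nat \<Rightarrow> int" where
  "cf_p \<xi> 0 = cf_a \<xi> 0"
| "cf_p \<xi> (Suc 0) = cf_a \<xi> 1 * cf_a \<xi> 0 + 1"
| "cf_p \<xi> (Suc (Suc k)) = cf_a \<xi> (k + 2) * cf_p \<xi> (Suc k) + cf_p \<xi> k"

end

theory Submission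
  imports Defs
begin

definition qq :: "real \<Rightarrow> nat \<Rightarrow> int" where
  "qq \<xi> n = (if n = 0 then 0 else cf_q \<xi> (n - 1))"
definition pp :: "real \<Rightarrow> nat \<Rightarrow> int" where
  "pp \<xi> n = (if n = 0 then 1 else cf_p \<xi> (n - 1))"

lemma qq_simps: "qq \<xi> 0 = 0" "qq \<xi> (Suc 0) = 1"
  "qq \<xi> (Suc (Suc n)) = cf_a \<xi> (Suc n) * qq \<xi> (Suc n) + qq \<xi> n"
  by (cases n; simp add: qq_def)+

lemma pp_simps: "pp \<xi> 0 = 1" "pp \<xi> (Suc 0) = cf_a \<xi> 0"
  "pp \<xi> (Suc (Suc n)) = cf_a \<xi> (Suc n) * pp \<xi> (Suc n) + pp \<xi> n"
  by (cases n; simp add: pp_def)+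

lemma cf_irr: assumes "\<xi> \<notin> \<rat>" shows "cf_complete \<xi> n \<notin> \<rat>"
proof (induction n)
  case 0 then show ?case using assms by simp
next
  case (Suc n)
  define x where "x = cf_complete \<xi> n"
  have "x - of_int \<lfloor>x\<rfloor> \<noteq> 0" using Suc x_def by (metis Rats_of_int eq_iff_diff_eq_0)
  show ?case
  proof
    assume "cf_complete \<xi> (Suc n) \<in> \<rat>"
    then have "1 / (x - of_int \<lfloor>x\<rfloor>) \<in> \<rat>" by (simp add: x_def)
    then have "1 / (1 / (x - of_int \<lfloor>x\<rfloor>)) \<in> \<rat>" by (rule Rats_divide[OF Rats_1])
    then have "x - of_int \<lfloor>x\<rfloor> \<in> \<rat>" by simp
    then have "x - of_int \<lfloor>x\<rfloor> + of_int \<lfloor>x\<rfloor> \<in> \<rat>" by (intro Rats_add) auto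
    then show False using Suc x_def by simp
  qed
qed

lemma cf_gt1: assumes "\<xi> \<notin> \<rat>" shows "cf_complete \<xi> (Suc n) > 1"
proof -
  define x where "x = cf_complete \<xi> n"
  have ne: "x - of_int \<lfloor>x\<rfloor> \<noteq> 0" using cf_irr[OF assms, of n] x_def
    by (metis Rats_of_int eq_iff_diff_eq_0)
  have "0 \<le> x - of_int \<lfloor>x\<rfloor>" "x - of_int \<lfloor>x\<rfloor> < 1" by linarith+
  then have "0 < x - of_int \<lfloor>x\<rfloor>" using ne by linarith
  then have "1 / (x - of_int \<lfloor>x\<rfloor>) > 1" using \<open>x - of_int \<lfloor>x\<rfloor> < 1\<close>
    by (simp add: field_simps)
  then show ?thesis by (simp add: x_def)
qed

lemma cf_rec: "cf_complete \<xi> n = of_int (cf_a \<xi> n) + 1 / cf_complete \<xi> (Suc n)"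
  by (simp add: cf_a_def)

lemma a_pos: assumes "\<xi> \<notin> \<rat>" shows "cf_a \<xi> (Suc n) \<ge> 1"
  using cf_gt1[OF assms, of n] unfolding cf_a_def by linarith

lemma qq_pos: assumes "\<xi> \<notin> \<rat>" shows "qq \<xi> (Suc n) \<ge> 1 \<and> qq \<xi> n \<ge> 0"
proof (induction n rule: nat_less_induct)
  case (1 n)
  show ?case
  proof (cases n)
    case 0 then show ?thesis by (simp add: qq_simps)
  next
    case (Suc m)
    then have h: "qq \<xi> (Suc m) \<ge> 1 \<and> qq \<xi> m \<ge> 0" using 1 by auto
    have "cf_a \<xi> (Suc m) \<ge> 1" by (rule a_pos[OF assms])
    then have "cf_a \<xi> (Suc m) * qq \<xi> (Suc m) \<ge> 1" using h
       mult_mono[of 1 "cf_a \<xi> (Suc m)" 1 "qq \<xi> (Suc m)"] by simp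
    then show ?thesis using h Suc by (simp add: qq_simps)
  qed
qed

lemma qq_growth: assumes "\<xi> \<notin> \<rat>" shows "qq \<xi> (n + 2) \<ge> int n + 1"
proof (induction n)
  case 0 then show ?case using a_pos[OF assms, of 0] by (simp add: qq_simps numeral_2_eq_2)
next
  case (Suc n)
  have a: "cf_a \<xi> (Suc (Suc n)) \<ge> 1" by (rule a_pos[OF assms])
  have q: "qq \<xi> (Suc (Suc n)) \<ge> 1" "qq \<xi> (Suc n) \<ge> 1" using qq_pos[OF assms] by auto
  have m: "cf_a \<xi> (Suc (Suc n)) * qq \<xi> (Suc (Suc n)) \<ge> qq \<xi> (Suc (Suc n))"
    using a q by simp
  have e: "qq \<xi> (Suc (Suc (Suc n))) = cf_a \<xi> (Suc (Suc n)) * qq \<xi> (Suc (Suc n)) + qq \<xi> (Suc n)"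
    by (rule qq_simps(3))
  have ih: "int n + 1 \<le> qq \<xi> (Suc (Suc n))" using Suc.IH by (simp add: numeral_2_eq_2)
  have "int (Suc n) + 1 \<le> qq \<xi> (Suc (Suc (Suc n)))" using ih q e m by linarith
  then show ?case by (simp add: numeral_2_eq_2)
qed

lemma ident: assumes "\<xi> \<notin> \<rat>"
  shows "\<xi> * (of_int (qq \<xi> (Suc n)) * cf_complete \<xi> (Suc n) + of_int (qq \<xi> n))
       = of_int (pp \<xi> (Suc n)) * cf_complete \<xi> (Suc n) + of_int (pp \<xi> n)"
proof (induction n)
  case 0
  have ne: "\<xi> - of_int \<lfloor>\<xi>\<rfloor> \<noteq> 0" using assms by (metis Rats_of_int eq_iff_diff_eq_0)
  then show ?case by (simp add: qq_simps pp_simps cf_a_def field_simps)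
next
  case (Suc n)
  define y where "y = cf_complete \<xi> (Suc (Suc n))"
  define a where "a = real_of_int (cf_a \<xi> (Suc n))"
  have y: "y > 0" using cf_gt1[OF assms] y_def by (metis less_trans zero_less_one)
  have x: "cf_complete \<xi> (Suc n) = a + 1 / y" using cf_rec y_def a_def by simp
  have IH: "\<xi> * (qq \<xi> (Suc n) * (a + 1/y) + qq \<xi> n) = pp \<xi> (Suc n) * (a + 1/y) + pp \<xi> n"
    using Suc.IH unfolding x .
  have yy: "1/y*y = 1" using y by simp
  have g: "\<And>Q1 Q0 z. (Q1 * (a + z) + Q0) * y = (a*Q1+Q0)*y + Q1*(z*y)" by algebra
  have "\<xi> * ((qq \<xi> (Suc n) * (a + 1/y) + qq \<xi> n) * y) = (pp \<xi> (Suc n) * (a + 1/y) + pp \<xi> n) * y"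
    using IH by simp
  then have "\<xi> * ((a * qq \<xi> (Suc n) + qq \<xi> n) * y + qq \<xi> (Suc n)) = (a * pp \<xi> (Suc n) + pp \<xi> n) * y + pp \<xi> (Suc n)"
    unfolding g yy by simp
  then show ?case by (simp add: qq_simps pp_simps y_def a_def)
qed

lemma det: "pp \<xi> (Suc n) * qq \<xi> n - pp \<xi> n * qq \<xi> (Suc n) = (-1) ^ (Suc n)"
proof (induction n)
  case 0 then show ?case by (simp add: qq_simps pp_simps)
next
  case (Suc n)
  then show ?case by (simp add: qq_simps pp_simps algebra_simps)
qed

definition Den :: "real \<Rightarrow> nat \<Rightarrow> real" where
  "Den \<xi> n = of_int (qq \<xi> (Suc n)) * cf_complete \<xi> (Suc n) + of_int (qq \<xi> n)"

lemma err: assumes "\<xi> \<notin> \<rat>"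
  shows "(of_int (qq \<xi> (Suc n)) * \<xi> - of_int (pp \<xi> (Suc n))) * Den \<xi> n = (-1) ^ n"
proof -
  define x where "x = cf_complete \<xi> (Suc n)"
  define Q1 where "Q1 = real_of_int (qq \<xi> (Suc n))"
  define Q0 where "Q0 = real_of_int (qq \<xi> n)"
  define P1 where "P1 = real_of_int (pp \<xi> (Suc n))"
  define P0 where "P0 = real_of_int (pp \<xi> n)"
  have id: "\<xi> * (Q1 * x + Q0) = P1 * x + P0" using ident[OF assms, of n]
    unfolding x_def Q1_def Q0_def P1_def P0_def .
  have d: "P1 * Q0 - P0 * Q1 = (-1) ^ Suc n" using arg_cong[OF det[of \<xi> n], of real_of_int]
    unfolding Q1_def Q0_def P1_def P0_def by simp
  have "(Q1 * \<xi> - P1) * (Q1 * x + Q0) = Q1 * (\<xi> * (Q1 * x + Q0)) - P1 * Q1 * x - P1 * Q0"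
    by algebra
  also have "\<dots> = - (P1 * Q0 - P0 * Q1)" unfolding id by algebra
  also have "\<dots> = (-1) ^ n" unfolding d by simp
  finally show ?thesis unfolding Den_def x_def Q1_def Q0_def P1_def P0_def .
qed

lemma Den_pos: assumes "\<xi> \<notin> \<rat>" shows "Den \<xi> n > 0"
proof -
  have "qq \<xi> (Suc n) \<ge> 1" "qq \<xi> n \<ge> 0" using qq_pos[OF assms] by auto
  moreover have "cf_complete \<xi> (Suc n) > 1" by (rule cf_gt1[OF assms])
  ultimately have "of_int (qq \<xi> (Suc n)) * cf_complete \<xi> (Suc n) > 0" "real_of_int (qq \<xi> n) \<ge> 0"
    by (simp_all del: cf_complete.simps)
  then show ?thesis unfolding Den_def by linarith
qed

lemma Den_eq: "Den \<xi> n = of_int (qq \<xi> (Suc (Suc n))) + of_int (qq \<xi> (Suc n)) / cf_complete \<xi> (Suc (Suc n))"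
proof -
  have "Den \<xi> n = of_int (qq \<xi> (Suc n)) * (of_int (cf_a \<xi> (Suc n)) + 1 / cf_complete \<xi> (Suc (Suc n))) + of_int (qq \<xi> n)"
    unfolding Den_def by (subst cf_rec) simp
  then show ?thesis by (simp add: qq_simps algebra_simps)
qed

lemma abs_err: assumes "\<xi> \<notin> \<rat>"
  shows "\<bar>of_int (qq \<xi> (Suc n)) * \<xi> - of_int (pp \<xi> (Suc n))\<bar> = 1 / Den \<xi> n"
proof -
  have "\<bar>(of_int (qq \<xi> (Suc n)) * \<xi> - of_int (pp \<xi> (Suc n))) * Den \<xi> n\<bar> = 1"
    unfolding err[OF assms] by simp
  moreover have "Den \<xi> n > 0" by (rule Den_pos[OF assms])
  ultimately have "\<bar>of_int (qq \<xi> (Suc n)) * \<xi> - of_int (pp \<xi> (Suc n))\<bar> * Den \<xi> n = 1"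
    by (simp only: abs_mult)
  then show ?thesis using \<open>Den \<xi> n > 0\<close> by (simp add: eq_divide_eq)
qed

lemma int_pos_prod: assumes "(u::int) * Q > 0" "Q \<ge> 1" shows "u \<ge> 1"
proof (rule ccontr)
  assume "\<not> u \<ge> 1" then have "u \<le> 0" by simp
  then have "u * Q \<le> 0" using assms(2) by (simp add: mult_nonpos_nonneg)
  then show False using assms(1) by simp
qed

lemma int_neg_prod: assumes "(u::int) * Q < 0" "Q \<ge> 1" shows "u \<le> -1"
proof (rule ccontr)
  assume "\<not> u \<le> -1" then have "u \<ge> 0" by simp
  then have "u * Q \<ge> 0" using assms(2) by simp
  then show False using assms(1) by simp
qed

lemma best_approx:
  assumes irr: "\<xi> \<notin> \<rat>" and q1: "(q::int) \<ge> 1" and q2: "q < qq \<xi> (Suc (Suc n))"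
  shows "\<bar>of_int q * \<xi> - of_int p\<bar> \<ge> \<bar>of_int (qq \<xi> (Suc n)) * \<xi> - of_int (pp \<xi> (Suc n))\<bar>"
proof -
  define P1 where "P1 = pp \<xi> (Suc n)"
  define Q1 where "Q1 = qq \<xi> (Suc n)"
  define P2 where "P2 = pp \<xi> (Suc (Suc n))"
  define Q2 where "Q2 = qq \<xi> (Suc (Suc n))"
  define D where "D = P2 * Q1 - P1 * Q2"
  have Dv: "D = (-1) ^ Suc (Suc n)" unfolding D_def P1_def Q1_def P2_def Q2_def by (rule det)
  have DD: "D * D = 1" unfolding Dv by (simp add: power_mult_distrib[symmetric])
  define u where "u = - D * (p * Q2 - q * P2)"
  define v where "v = - D * (P1 * q - Q1 * p)"
  have pu: "u * P1 + v * P2 = (D * D) * p" unfolding u_def v_def D_def by algebra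
  have qu: "u * Q1 + v * Q2 = (D * D) * q" unfolding u_def v_def D_def by algebra
  have pe: "p = u * P1 + v * P2" using pu DD by simp
  have qe: "q = u * Q1 + v * Q2" using qu DD by simp
  define e1 where "e1 = real_of_int Q1 * \<xi> - of_int P1"
  define e2 where "e2 = real_of_int Q2 * \<xi> - of_int P2"
  have lin: "real_of_int q * \<xi> - of_int p = of_int u * e1 + of_int v * e2"
  proof -
    have "real_of_int q = of_int u * of_int Q1 + of_int v * of_int Q2" using qe by simp
    moreover have "real_of_int p = of_int u * of_int P1 + of_int v * of_int P2" using pe by simp
    ultimately show ?thesis unfolding e1_def e2_def by (simp add: algebra_simps)
  qed
  define s :: real where "s = (-1) ^ n"
  have ss: "s * s = 1" unfolding s_def by (simp add: power_mult_distrib[symmetric])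
  have as: "\<bar>s\<bar> = 1" unfolding s_def by simp
  have E1: "e1 * Den \<xi> n = s" unfolding e1_def s_def Q1_def P1_def by (rule err[OF irr])
  have E2: "e2 * Den \<xi> (Suc n) = - s" unfolding e2_def s_def Q2_def P2_def using err[OF irr, of "Suc n"] by simp
  have D1: "Den \<xi> n > 0" "Den \<xi> (Suc n) > 0" using Den_pos[OF irr] by auto
  have "(s * e1) * Den \<xi> n = 1" using E1 ss by (metis mult.assoc)
  then have se1: "s * e1 > 0" using D1(1)
  proof -
    assume h: "(s * e1) * Den \<xi> n = 1"
    show ?thesis
    proof (rule ccontr)
      assume "\<not> s * e1 > 0"
      then have "(s * e1) * Den \<xi> n \<le> 0" using D1(1) by (simp add: mult_nonpos_nonneg)
      then show False using h by simp
    qed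
  qed
  have "(s * e2) * Den \<xi> (Suc n) = -1" using E2 ss by (metis mult.assoc mult_minus_right)
  then have se2: "s * e2 < 0"
  proof -
    assume h: "(s * e2) * Den \<xi> (Suc n) = -1"
    show ?thesis
    proof (rule ccontr)
      assume "\<not> s * e2 < 0"
      then have "(s * e2) * Den \<xi> (Suc n) \<ge> 0" using D1(2) by simp
      then show False using h by simp
    qed
  qed
  have abs1: "\<bar>e1\<bar> = s * e1" using se1 as by (metis abs_mult abs_of_pos mult_1)
  have key: "s * (real_of_int q * \<xi> - of_int p) = of_int u * (s * e1) + of_int v * (s * e2)"
    unfolding lin by (simp add: algebra_simps)
  have Q1p: "Q1 \<ge> 1" unfolding Q1_def using qq_pos[OF irr] by auto
  have Q2p: "Q2 > q" using q2 unfolding Q2_def .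
  have "\<bar>s * (real_of_int q * \<xi> - of_int p)\<bar> \<ge> s * e1"
  proof (cases "v = 0")
    case True
    then have "q = u * Q1" using qe by simp
    then have "u \<ge> 1" using q1 Q1p int_pos_prod[of u Q1] by simp
    then have "of_int u * (s * e1) \<ge> 1 * (s * e1)" using se1
      by (intro mult_right_mono) auto
    moreover have "s * (real_of_int q * \<xi> - of_int p) = of_int u * (s * e1)" using key True by simp
    ultimately show ?thesis by linarith
  next
    case False
    then consider "v \<ge> 1" | "v \<le> -1" by linarith
    then show ?thesis
    proof cases
      case 1
      then have "v * Q2 \<ge> Q2" using Q2p q1 by simp
      then have "u * Q1 < 0" using qe Q2p by linarith
      then have "u \<le> -1" using Q1p int_neg_prod by blast
      then have a: "of_int u * (s * e1) \<le> -1 * (s * e1)" using se1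
        by (intro mult_right_mono) auto
      have b: "of_int v * (s * e2) \<le> 0" using 1 se2 by (simp add: mult_nonneg_nonpos)
      have "s * (real_of_int q * \<xi> - of_int p) \<le> - (s * e1)" using key a b by linarith
      then show ?thesis by linarith
    next
      case 2
      then have "v * Q2 \<le> -1 * Q2" using Q2p q1 by (intro mult_right_mono) auto
      then have "v * Q2 \<le> - Q2" by simp
      then have "u * Q1 > 0" using qe Q2p q1 by linarith
      then have "u \<ge> 1" using Q1p int_pos_prod by blast
      then have a: "of_int u * (s * e1) \<ge> 1 * (s * e1)" using se1
        by (intro mult_right_mono) auto
      have b: "of_int v * (s * e2) \<ge> 0" using 2 se2 by (simp add: mult_nonpos_nonpos)
      have "s * (real_of_int q * \<xi> - of_int p) \<ge> s * e1" using key a b by linarith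
      then show ?thesis by linarith
    qed
  qed
  then show ?thesis using as abs1 unfolding e1_def Q1_def P1_def by (simp add: abs_mult)
qed

lemma cond_iff:
  assumes irr: "\<xi> \<notin> \<rat>" and g: "\<gamma> > 0"
  shows "(real_of_int (cf_q \<xi> (k + 1)) / (real_of_int (cf_q \<xi> k) powr \<tau>)
       + 1 / (cf_complete \<xi> (k + 2) * real_of_int (cf_q \<xi> k) powr (\<tau> - 1))
       \<le> 1 / \<gamma>) \<longleftrightarrow> \<gamma> / (real_of_int (qq \<xi> (Suc k)) powr \<tau>) \<le> 1 / Den \<xi> k"
proof -
  define Q where "Q = real_of_int (qq \<xi> (Suc k))"
  define Q2 where "Q2 = real_of_int (qq \<xi> (Suc (Suc k)))"
  define X where "X = cf_complete \<xi> (Suc (Suc k))"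
  define R where "R = Q powr (\<tau> - 1)"
  have e1: "cf_q \<xi> k = qq \<xi> (Suc k)" "cf_q \<xi> (k + 1) = qq \<xi> (Suc (Suc k))" "k + 2 = Suc (Suc k)"
    by (simp_all add: qq_def)
  have Qp: "Q \<ge> 1" unfolding Q_def using qq_pos[OF irr, of k] by simp
  have Xp: "X > 1" unfolding X_def by (rule cf_gt1[OF irr])
  have Rp: "R > 0" unfolding R_def using Qp by simp
  have QR: "Q powr \<tau> = Q * R" unfolding R_def using Qp
    by (metis add.commute diff_add_cancel powr_add powr_one order.trans zero_le_one)
  have Dn: "Den \<xi> k = Q2 + Q / X" unfolding Q2_def Q_def X_def by (rule Den_eq)
  have Dp: "Den \<xi> k > 0" by (rule Den_pos[OF irr])
  have lhs: "Q2 / (Q * R) + 1 / (X * R) = Den \<xi> k / (Q * R)"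
    unfolding Dn using Qp Xp Rp by (simp add: field_simps)
  have "(Den \<xi> k / (Q * R) \<le> 1 / \<gamma>) \<longleftrightarrow> \<gamma> * Den \<xi> k \<le> Q * R"
    using Qp Rp g by (simp add: field_simps)
  also have "\<dots> \<longleftrightarrow> \<gamma> / (Q * R) \<le> 1 / Den \<xi> k"
    using Qp Rp Dp by (simp add: field_simps)
  finally show ?thesis unfolding e1 QR[symmetric] Q_def[symmetric] Q2_def[symmetric] X_def[symmetric]
      R_def[symmetric] lhs[unfolded QR[symmetric]] .
qed

theorem mainTheorem2:
  fixes \<gamma> \<tau> \<xi> :: real
  assumes "\<gamma> > 0" and "\<tau> \<ge> 1" and "\<xi> \<notin> \<rat>"
  shows "\<xi> \<in> diophantine_set \<gamma> \<tau> \<longleftrightarrow>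
    (\<forall>k::nat.
       real_of_int (cf_q \<xi> (k + 1)) / (real_of_int (cf_q \<xi> k) powr \<tau>)
       + 1 / (cf_complete \<xi> (k + 2) * real_of_int (cf_q \<xi> k) powr (\<tau> - 1))
       \<le> 1 / \<gamma>)"
proof -
  note irr = assms(3)
  have "\<xi> \<in> diophantine_set \<gamma> \<tau> \<longleftrightarrow>
        (\<forall>k. \<gamma> / (real_of_int (qq \<xi> (Suc k)) powr \<tau>) \<le> 1 / Den \<xi> k)"
  proof
    assume D: "\<xi> \<in> diophantine_set \<gamma> \<tau>"
    show "\<forall>k. \<gamma> / (real_of_int (qq \<xi> (Suc k)) powr \<tau>) \<le> 1 / Den \<xi> k"
    proof
      fix k
      define Q where "Q = qq \<xi> (Suc k)"
      have Qp: "Q \<ge> 1" unfolding Q_def using qq_pos[OF irr, of k] by simp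
      have "nat Q \<ge> 1" using Qp by simp
      then have "\<bar>\<xi> * real (nat Q) - real_of_int (pp \<xi> (Suc k))\<bar> \<ge> \<gamma> / (real (nat Q) powr \<tau>)"
        using D unfolding diophantine_set_def by blast
      moreover have "real (nat Q) = real_of_int Q" using Qp by simp
      ultimately have "\<bar>real_of_int Q * \<xi> - real_of_int (pp \<xi> (Suc k))\<bar> \<ge> \<gamma> / (real_of_int Q powr \<tau>)"
        by (simp add: mult.commute)
      then show "\<gamma> / (real_of_int (qq \<xi> (Suc k)) powr \<tau>) \<le> 1 / Den \<xi> k"
        using abs_err[OF irr, of k] unfolding Q_def by simp
    qed
  next
    assume C: "\<forall>k. \<gamma> / (real_of_int (qq \<xi> (Suc k)) powr \<tau>) \<le> 1 / Den \<xi> k"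
    show "\<xi> \<in> diophantine_set \<gamma> \<tau>"
      unfolding diophantine_set_def
    proof (intro CollectI allI impI)
      fix p :: int and q :: nat
      assume q1: "q \<ge> 1"
      define S where "S = {m. int q < qq \<xi> (Suc (Suc m))}"
      have "q \<in> S" unfolding S_def using qq_growth[OF irr, of q] by (simp add: numeral_2_eq_2)
      define m where "m = (LEAST m. m \<in> S)"
      have mS: "m \<in> S" unfolding m_def using \<open>q \<in> S\<close> by (rule LeastI)
      have lo: "qq \<xi> (Suc m) \<le> int q"
      proof (cases m)
        case 0 then show ?thesis using q1 by (simp add: qq_simps)
      next
        case (Suc j)
        then have "j < m" by simp
        then have "j \<notin> S" unfolding m_def by (rule not_less_Least)
        then show ?thesis unfolding S_def using Suc by simp
      qed
      have hi: "int q < qq \<xi> (Suc (Suc m))" using mS unfolding S_def by simp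
      have "\<bar>of_int (int q) * \<xi> - of_int p\<bar> \<ge> \<bar>of_int (qq \<xi> (Suc m)) * \<xi> - of_int (pp \<xi> (Suc m))\<bar>"
        using best_approx[OF irr _ hi] q1 by simp
      then have a: "\<bar>real q * \<xi> - of_int p\<bar> \<ge> 1 / Den \<xi> m" using abs_err[OF irr, of m] by simp
      have Qp: "real_of_int (qq \<xi> (Suc m)) \<ge> 1" using qq_pos[OF irr, of m] by simp
      have "real_of_int (qq \<xi> (Suc m)) powr \<tau> \<le> real q powr \<tau>"
        using lo Qp assms(2) by (intro powr_mono2) auto
      moreover have "real_of_int (qq \<xi> (Suc m)) powr \<tau> > 0" using Qp by simp
      ultimately have "\<gamma> / (real q powr \<tau>) \<le> \<gamma> / (real_of_int (qq \<xi> (Suc m)) powr \<tau>)"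
        using assms(1) q1 by (intro divide_left_mono) (auto intro!: mult_pos_pos)
      also have "\<dots> \<le> 1 / Den \<xi> m" using C by blast
      finally show "\<gamma> / (real q powr \<tau>) \<le> \<bar>\<xi> * real q - real_of_int p\<bar>"
        using a by (simp add: mult.commute)
    qed
  qed
  also have "\<dots> \<longleftrightarrow> (\<forall>k::nat.
       real_of_int (cf_q \<xi> (k + 1)) / (real_of_int (cf_q \<xi> k) powr \<tau>)
       + 1 / (cf_complete \<xi> (k + 2) * real_of_int (cf_q \<xi> k) powr (\<tau> - 1))
       \<le> 1 / \<gamma>)"
    using cond_iff[OF irr assms(1)] by simp
  finally show ?thesis .
qed

end
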